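(* Let $n\ge2$, $\alpha\in(-n,0)$ and let $\phi$ be a Young function satisfying $\underline\Lambda_\phi(\alpha)<\infty$ and $\overline\Lambda_\phi(\alpha)<\infty$. Then there exists a constant $C>0$ depending on $n,\alpha,\phi$ such that for any domain $\Omega\subset\mathbb R^n$, any $x\in\Omega$ and any $0<r<t<\frac12\operatorname{diam}\Omega$, the function $u_{x,r,t}$ belongs to $\dot{\mathbf B}^{\alpha,\phi}(\Omega)$ and $$\|u_{x,r,t}\|_{\dot{\mathbf B}^{\alpha,\phi}(\Omega)}\le C(t-r)^{-\alpha}\Big[\phi^{-1}\Big(\frac{(t-r)^n}{|B_\Omega(x,t)|}\Big)\Big]^{-1}.$$
   Context: A Young function is $\phi\in C([0,\infty))$, convex, with $\phi(0)=0$, $\phi(t)>0$ for $t>0$, $\lim_{t\to\infty}\phi(t)=\infty$; $\phi^{-1}$ is its inverse function on $[0,\infty)$. $\underline\Lambda_\phi(\alpha):=\sup_{x>0}\int_0^1\frac{\phi(t^{1-\alpha}x)}{\phi(x)}\frac{dt}{t^{n+1}}$, $\overline\Lambda_\phi(\alpha):=\sup_{x>0}\int_1^\infty\frac{\phi(t^{-\alpha}x)}{\phi(x)}\frac{dt}{t^{n+1}}$. $\dot{\mathbf B}^{\alpha,\phi}(\Omega)$ is the space of measurable $u$ on $\Omega$ with finite $\|u\|_{\dot{\mathbf B}^{\alpha,\phi}(\Omega)}:=\inf\{\lambda>0:\int_\Omega\int_\Omega\phi(\frac{|u(x)-u(y)|}{\lambda|x-y|^{\alpha}})\frac{dx\,dy}{|x-y|^{2n}}\le1\}$.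 $B_\Omega(x,s):=\Omega\cap B(x,s)$. For $x\in\Omega$ and $0<r<t$, $u_{x,r,t}:\Omega\to\mathbb R$ is defined by $u_{x,r,t}(z)=1$ for $z\in B_\Omega(x,r)$, $u_{x,r,t}(z)=\frac{t-|x-z|}{t-r}$ for $z\in B_\Omega(x,t)\setminus B_\Omega(x,r)$, and $u_{x,r,t}(z)=0$ for $z\in\Omega\setminus B_\Omega(x,t)$. *)

theory Defs
  imports "HOL-Analysis.Analysis"
begin

text \<open>Young function (only its values on [0,\<infinity>) matter).\<close>
definition young_function :: "(real \<Rightarrow> real) \<Rightarrow> bool" where
  "young_function \<phi> \<longleftrightarrow>
     continuous_on {0..} \<phi> \<and> convex_on {0..} \<phi> \<and> \<phi> 0 = 0 \<and>
     (\<forall>t>0. \<phi> t > 0) \<and> filterlim \<phi> at_top at_top"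

definition young_inv :: "(real \<Rightarrow> real) \<Rightarrow> real \<Rightarrow> real" where
  "young_inv \<phi> s = (THE t. t \<ge> 0 \<and> \<phi> t = s)"

definition Lambda_lower :: "nat \<Rightarrow> (real \<Rightarrow> real) \<Rightarrow> real \<Rightarrow> ennreal" where
  "Lambda_lower n \<phi> \<alpha> =
     (SUP x\<in>{0<..}. \<integral>\<^sup>+ t\<in>{0<..1}. ennreal (\<phi> (t powr (1 - \<alpha>) * x) / \<phi> x / t ^ (n + 1)) \<partial>lborel)"

definition Lambda_upper :: "nat \<Rightarrow> (real \<Rightarrow> real) \<Rightarrow> real \<Rightarrow> ennreal" where
  "Lambda_upper n \<phi> \<alpha> =
     (SUP x\<in>{0<..}. \<integral>\<^sup>+ t\<in>{1..}. ennreal (\<phi> (t powr (- \<alpha>) * x) / \<phi> x / t ^ (n + 1)) \<partial>lborel)"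

definition besov_energy ::
  "real \<Rightarrow> (real \<Rightarrow> real) \<Rightarrow> ('a::euclidean_space) set \<Rightarrow> ('a \<Rightarrow> real) \<Rightarrow> real \<Rightarrow> ennreal" where
  "besov_energy \<alpha> \<phi> \<Omega> u lam =
     (\<integral>\<^sup>+ x\<in>\<Omega>. (\<integral>\<^sup>+ y\<in>\<Omega>.
        ennreal (\<phi> (\<bar>u x - u y\<bar> / (lam * dist x y powr \<alpha>)) / dist x y ^ (2 * DIM('a)))
      \<partial>lebesgue) \<partial>lebesgue)"

definition besov_norm ::
  "real \<Rightarrow> (real \<Rightarrow> real) \<Rightarrow> ('a::euclidean_space) set \<Rightarrow> ('a \<Rightarrow> real) \<Rightarrow> real" where
  "besov_norm \<alpha> \<phi> \<Omega> u = Inf {lam. lam > 0 \<and> besov_energy \<alpha> \<phi> \<Omega> u lam \<le> 1}"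

definition in_besov ::
  "real \<Rightarrow> (real \<Rightarrow> real) \<Rightarrow> ('a::euclidean_space) set \<Rightarrow> ('a \<Rightarrow> real) \<Rightarrow> bool" where
  "in_besov \<alpha> \<phi> \<Omega> u \<longleftrightarrow> u \<in> borel_measurable (lebesgue_on \<Omega>) \<and>
     (\<exists>lam>0. besov_energy \<alpha> \<phi> \<Omega> u lam \<le> 1)"

text \<open>The cut-off function u_{x,r,t} (values outside \<Omega> are irrelevant; set to 0).\<close>
definition cutoff :: "('a::euclidean_space) set \<Rightarrow> 'a \<Rightarrow> real \<Rightarrow> real \<Rightarrow> 'a \<Rightarrow> real" where
  "cutoff \<Omega> x r t z =
     (if z \<in> \<Omega> \<inter> ball x r then 1
      else if z \<in> \<Omega> \<inter> ball x t then (t - dist x z) / (t - r)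
      else 0)"

end

theory Submission
  imports Defs "HOL-Probability.Probability_Measure"
begin

lemma radial_distributed:
  "distributed (lborel :: ('a::euclidean_space) measure) lborel norm
     (\<lambda>\<rho>. ennreal (indicator {0..} \<rho> * (real DIM('a) * unit_ball_vol (real DIM('a)) * \<rho> ^ (DIM('a) - 1))))"
proof (rule distributedI_borel_atMost[where g = "\<lambda>a. if a \<ge> 0 then unit_ball_vol (real DIM('a)) * a ^ DIM('a) else 0"])
  show "AE x in lborel. 0 \<le> indicator {0..} x * (real DIM('a) * unit_ball_vol (real DIM('a)) * x ^ (DIM('a) - 1))"
    by (auto simp: indicator_def)
next
  fix a :: real
  show "emeasure lborel {x \<in> space lborel. norm (x::'a) \<le> a} =
        ennreal (if a \<ge> 0 then unit_ball_vol (real DIM('a)) * a ^ DIM('a) else 0)"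
  proof (cases "a \<ge> 0")
    case True
    have "{x \<in> space lborel. norm (x::'a) \<le> a} = cball 0 a" by (auto simp: cball_def)
    then show ?thesis using True emeasure_cball[of a 0] by simp
  next
    case False
    then have "{x \<in> space lborel. norm (x::'a) \<le> a} = {}" by (auto dest: order_trans[OF norm_ge_zero])
    then show ?thesis using False by simp
  qed
next
  fix a :: real
  show "(\<integral>\<^sup>+ x. ennreal (indicator {0..} x * (real DIM('a) * unit_ball_vol (real DIM('a)) * x ^ (DIM('a) - 1)) * indicator {..a} x) \<partial>lborel) =
        ennreal (if a \<ge> 0 then unit_ball_vol (real DIM('a)) * a ^ DIM('a) else 0)"
  proof (cases "a \<ge> 0")
    case True
    have "(\<integral>\<^sup>+ x. ennreal (indicator {0..} x * (real DIM('a) * unit_ball_vol (real DIM('a)) * x ^ (DIM('a) - 1)) * indicator {..a} x) \<partial>lborel)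
      = (\<integral>\<^sup>+ x. ennreal (real DIM('a) * unit_ball_vol (real DIM('a)) * x ^ (DIM('a) - 1)) * indicator {0..a} x \<partial>lborel)"
      by (intro nn_integral_cong) (auto simp: indicator_def)
    also have "\<dots> = unit_ball_vol (real DIM('a)) * a ^ DIM('a) - unit_ball_vol (real DIM('a)) * 0 ^ DIM('a)"
    proof (rule nn_integral_FTC_Icc)
      fix x :: real assume "x \<in> {0..a}"
      show "((\<lambda>x. unit_ball_vol (real DIM('a)) * x ^ DIM('a)) has_real_derivative real DIM('a) * unit_ball_vol (real DIM('a)) * x ^ (DIM('a) - 1)) (at x)"
        by (auto intro!: derivative_eq_intros)
      show "0 \<le> real DIM('a) * unit_ball_vol (real DIM('a)) * x ^ (DIM('a) - 1)"
        using \<open>x \<in> {0..a}\<close> by auto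
    qed (use True in auto)
    finally show ?thesis using True by simp
  next
    case False
    have "(\<integral>\<^sup>+ x. ennreal (indicator {0..} x * (real DIM('a) * unit_ball_vol (real DIM('a)) * x ^ (DIM('a) - 1)) * indicator {..a} x) \<partial>lborel) = (\<integral>\<^sup>+ x. 0 \<partial>(lborel::real measure))"
      using False by (intro nn_integral_cong) (auto simp: indicator_def)
    then show ?thesis using False by simp
  qed
qed auto

lemma radial_integral:
  assumes [measurable]: "g \<in> borel_measurable borel"
  shows "(\<integral>\<^sup>+ h. g (norm h) \<partial>(lborel :: ('a::euclidean_space) measure)) =
    (\<integral>\<^sup>+ \<rho>. ennreal (indicator {0..} \<rho> * (real DIM('a) * unit_ball_vol (real DIM('a)) * \<rho> ^ (DIM('a) - 1))) * g \<rho> \<partial>lborel)"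
  using distributed_nn_integral[OF radial_distributed[where 'a='a], of g] by simp

lemma yf_scale:
  assumes "young_function \<phi>" "0 \<le> c" "c \<le> 1" "0 \<le> s"
  shows "\<phi> (c * s) \<le> c * \<phi> s"
proof -
  have cv: "convex_on {0..} \<phi>" and z: "\<phi> 0 = 0" using assms(1) by (auto simp: young_function_def)
  have "\<phi> ((1 - c) *\<^sub>R 0 + c *\<^sub>R s) \<le> (1 - c) * \<phi> 0 + c * \<phi> s"
    by (rule convex_onD[OF cv]) (use assms in auto)
  then show ?thesis using z by simp
qed

lemma yf_nonneg:
  assumes "young_function \<phi>" "0 \<le> a" shows "0 \<le> \<phi> a"
  using assms unfolding young_function_def by (cases "a = 0") (auto simp: less_imp_le)

lemma yf_mono:
  assumes "young_function \<phi>" "0 \<le> a" "a \<le> b"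
  shows "\<phi> a \<le> \<phi> b"
proof (cases "b = 0")
  case True then show ?thesis using assms by simp
next
  case False
  then have b: "b > 0" using assms by simp
  have "\<phi> a = \<phi> ((a / b) * b)" using b by simp
  also have "\<dots> \<le> (a / b) * \<phi> b" using assms b by (intro yf_scale) auto
  also have "\<dots> \<le> \<phi> b" using assms b yf_nonneg[OF assms(1), of b]
    by (simp add: divide_le_eq mult.commute mult_right_mono)
  finally show ?thesis .
qed

lemma yf_strict:
  assumes "young_function \<phi>" "0 \<le> a" "a < b"
  shows "\<phi> a < \<phi> b"
proof (cases "a = 0")
  case True then show ?thesis using assms unfolding young_function_def by auto
next
  case False
  then have a: "a > 0" and b: "b > 0" using assms by auto
  have pb: "\<phi> b > 0" using assms b unfolding young_function_def by auto
  have "\<phi> a = \<phi> ((a / b) * b)" using b by simp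
  also have "\<dots> \<le> (a / b) * \<phi> b" using assms b by (intro yf_scale) auto
  also have "\<dots> < \<phi> b" using assms b pb by (simp add: field_simps)
  finally show ?thesis .
qed

lemma yf_inv:
  assumes "young_function \<phi>" "0 \<le> s"
  shows "0 \<le> young_inv \<phi> s \<and> \<phi> (young_inv \<phi> s) = s"
proof -
  have ct: "continuous_on {0..} \<phi>" and z: "\<phi> 0 = 0" and lim: "filterlim \<phi> at_top at_top"
    using assms(1) by (auto simp: young_function_def)
  have "\<forall>\<^sub>F x in at_top. s \<le> \<phi> x" using lim by (simp add: filterlim_at_top)
  then obtain N where N: "\<And>x. x \<ge> N \<Longrightarrow> s \<le> \<phi> x" by (auto simp: eventually_at_top_linorder)
  define b where "b = max N 0"
  have "\<exists>x. 0 \<le> x \<and> x \<le> b \<and> \<phi> x = s"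
    by (rule IVT') (use z assms N[of b] in \<open>auto simp: b_def intro: continuous_on_subset[OF ct]\<close>)
  then obtain x where x: "0 \<le> x" "\<phi> x = s" by auto
  have "young_inv \<phi> s = x"
    unfolding young_inv_def
  proof (rule the_equality)
    fix y assume y: "0 \<le> y \<and> \<phi> y = s"
    show "y = x"
    proof (rule ccontr)
      assume "y \<noteq> x"
      then have "y < x \<or> x < y" by auto
      then show False using yf_strict[OF assms(1)] x y by fastforce
    qed
  qed (use x in auto)
  then show ?thesis using x by simp
qed

lemma yf_inv_pos:
  assumes "young_function \<phi>" "0 < s"
  shows "0 < young_inv \<phi> s"
  using yf_inv[OF assms(1), of s] assms unfolding young_function_def
  by (metis less_eq_real_def less_irrefl)

definition pext :: "(real \<Rightarrow> real) \<Rightarrow> real \<Rightarrow> real" where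
  "pext \<phi> v = \<phi> (max 0 v)"

lemma pext_eq: "0 \<le> v \<Longrightarrow> pext \<phi> v = \<phi> v"
  by (simp add: pext_def)

lemma pext_meas [measurable]:
  assumes "young_function \<phi>"
  shows "pext \<phi> \<in> borel_measurable borel"
proof -
  have ct: "continuous_on {0..} \<phi>" using assms by (simp add: young_function_def)
  have "continuous_on UNIV (\<lambda>v. \<phi> (max 0 v))"
    by (rule continuous_on_compose2[OF ct]) (auto intro!: continuous_intros)
  then show ?thesis unfolding pext_def by (rule borel_measurable_continuous_onI)
qed

lemma real_ident_aux:
  fixes s \<tau> P Q w :: real and m :: nat
  assumes "s > 0" "\<tau> > 0" "Q > 0"
  shows "s * (real (Suc m) * w * (s * \<tau>) ^ m) * (P / (s * \<tau>) ^ (2 * Suc m))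
       = real (Suc m) * w / s ^ Suc m * Q * (P / Q / \<tau> ^ (Suc m + 1))"
proof -
  have e: "(s * \<tau>) ^ (2 * Suc m) = (s * \<tau>) ^ m * ((s * \<tau>) ^ m * (s * \<tau>) * (s * \<tau>))"
    by (simp add: power_add[symmetric] mult_2)
  have e2: "\<tau> ^ (Suc m + 1) = \<tau> ^ m * \<tau> * \<tau>" by simp
  have e3: "s ^ Suc m = s ^ m * s" by simp
  show ?thesis unfolding e e2 e3 using assms by (simp add: field_simps power_mult_distrib)
qed

lemma K_bound:
  fixes \<phi> :: "real \<Rightarrow> real" and \<alpha> s lam w :: real and n :: nat
  assumes young: "young_function \<phi>" and s: "s > 0" and lam: "lam > 0" and n: "n \<ge> 1" and w: "w \<ge> 0"
  shows "(\<integral>\<^sup>+\<rho>. ennreal (indicator {0..} \<rho> * (real n * w * \<rho> ^ (n - 1))) *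
             ennreal (pext \<phi> (min 1 (\<rho> / s) * \<rho> powr (-\<alpha>) / lam) / \<rho> ^ (2 * n)) \<partial>lborel)
         \<le> ennreal (real n * w / s ^ n * \<phi> (s powr (-\<alpha>) / lam)) * (Lambda_lower n \<phi> \<alpha> + Lambda_upper n \<phi> \<alpha>)"
proof -
  define X where "X = s powr (-\<alpha>) / lam"
  have X: "X > 0" using s lam by (simp add: X_def)
  have QX: "\<phi> X > 0" using young X by (simp add: young_function_def)
  define A where "A = real n * w / s ^ n * \<phi> X"
  have A: "A \<ge> 0" using w s QX by (simp add: A_def)
  define f where "f = (\<lambda>\<rho>. ennreal (indicator {0..} \<rho> * (real n * w * \<rho> ^ (n - 1))) *
             ennreal (pext \<phi> (min 1 (\<rho> / s) * \<rho> powr (-\<alpha>) / lam) / \<rho> ^ (2 * n)))"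
  define low where "low = (\<lambda>\<tau>. ennreal (pext \<phi> (\<tau> powr (1 - \<alpha>) * X) / \<phi> X / \<tau> ^ (n + 1)))"
  define up where "up = (\<lambda>\<tau>. ennreal (pext \<phi> (\<tau> powr (- \<alpha>) * X) / \<phi> X / \<tau> ^ (n + 1)))"
  have fm[measurable]: "f \<in> borel_measurable borel" using young unfolding f_def by measurable
  have lowm[measurable]: "low \<in> borel_measurable borel" using young unfolding low_def by measurable
  have upm[measurable]: "up \<in> borel_measurable borel" using young unfolding up_def by measurable
  obtain m where m: "n = Suc m" using n by (cases n) auto
  have pw: "ennreal s * f (0 + s * \<tau>) \<le> ennreal A * (low \<tau> * indicator {0<..1} \<tau> + up \<tau> * indicator {1<..} \<tau>)" for \<tau>
  proof (cases "\<tau> > 0")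
    case False
    then have "f (0 + s * \<tau>) = 0"
    proof (cases "\<tau> = 0")
      case True
      have "(0::real) ^ (2 * n) = 0" using n by simp
      then show ?thesis using True n by (simp add: f_def power_0_left)
    next
      case False2: False
      then have "s * \<tau> < 0" using \<open>\<not> \<tau> > 0\<close> s by (simp add: mult_pos_neg)
      then show ?thesis by (simp add: f_def indicator_def)
    qed
    then show ?thesis by simp
  next
    case True
    have pm: "(s * \<tau>) powr (-\<alpha>) = s powr (-\<alpha>) * \<tau> powr (-\<alpha>)"
      using s True by (simp add: powr_mult)
    have fval: "ennreal s * f (0 + s * \<tau>) = ennreal (s * (real n * w * (s * \<tau>) ^ (n - 1)) *
                 (pext \<phi> (min 1 \<tau> * \<tau> powr (-\<alpha>) * X) / (s * \<tau>) ^ (2 * n)))"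
    proof -
      have "min 1 (s * \<tau> / s) * (s * \<tau>) powr (-\<alpha>) / lam = min 1 \<tau> * \<tau> powr (-\<alpha>) * X"
        using s by (simp add: pm X_def)
      moreover have "0 \<le> pext \<phi> (min 1 \<tau> * \<tau> powr (-\<alpha>) * X)"
        unfolding pext_def by (rule yf_nonneg[OF young]) simp
      ultimately show ?thesis using s True w
        by (simp add: f_def ennreal_mult[symmetric] indicator_def)
    qed
    show ?thesis
    proof (cases "\<tau> \<le> 1")
      case True2: True
      have e: "min 1 \<tau> * \<tau> powr (-\<alpha>) * X = \<tau> powr (1 - \<alpha>) * X"
        using True True2 by (simp add: powr_diff powr_minus divide_inverse)
      have r: "s * (real n * w * (s * \<tau>) ^ (n - 1)) * (pext \<phi> (\<tau> powr (1 - \<alpha>) * X) / (s * \<tau>) ^ (2 * n))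
          = A * (pext \<phi> (\<tau> powr (1 - \<alpha>) * X) / \<phi> X / \<tau> ^ (n + 1))"
        using real_ident_aux[OF s True QX, of m w "pext \<phi> (\<tau> powr (1 - \<alpha>) * X)"] unfolding A_def m by simp
      have nn: "0 \<le> pext \<phi> (\<tau> powr (1 - \<alpha>) * X) / \<phi> X / \<tau> ^ (n + 1)"
        using QX True yf_nonneg[OF young] by (simp add: pext_def)
      have "ennreal s * f (0 + s * \<tau>) = ennreal A * low \<tau>"
        unfolding fval e r low_def by (rule ennreal_mult[OF A nn])
      then show ?thesis using True True2 by (simp add: indicator_def)
    next
      case False2: False
      have e: "min 1 \<tau> * \<tau> powr (-\<alpha>) * X = \<tau> powr (- \<alpha>) * X"
        using False2 by simp
      have r: "s * (real n * w * (s * \<tau>) ^ (n - 1)) * (pext \<phi> (\<tau> powr (- \<alpha>) * X) / (s * \<tau>) ^ (2 * n))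
          = A * (pext \<phi> (\<tau> powr (- \<alpha>) * X) / \<phi> X / \<tau> ^ (n + 1))"
        using real_ident_aux[OF s True QX, of m w "pext \<phi> (\<tau> powr (- \<alpha>) * X)"] unfolding A_def m by simp
      have nn: "0 \<le> pext \<phi> (\<tau> powr (- \<alpha>) * X) / \<phi> X / \<tau> ^ (n + 1)"
        using QX True yf_nonneg[OF young] by (simp add: pext_def)
      have "ennreal s * f (0 + s * \<tau>) = ennreal A * up \<tau>"
        unfolding fval e r up_def by (rule ennreal_mult[OF A nn])
      then show ?thesis using True False2 by (simp add: indicator_def)
    qed
  qed
  have "integral\<^sup>N lborel f = ennreal s * (\<integral>\<^sup>+\<tau>. f (0 + s * \<tau>) \<partial>lborel)"
    using nn_integral_real_affine[OF fm, of s 0] s by simp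
  also have "\<dots> = (\<integral>\<^sup>+\<tau>. ennreal s * f (0 + s * \<tau>) \<partial>lborel)"
    by (rule nn_integral_cmult[symmetric]) measurable
  also have "\<dots> \<le> (\<integral>\<^sup>+\<tau>. ennreal A * (low \<tau> * indicator {0<..1} \<tau> + up \<tau> * indicator {1<..} \<tau>) \<partial>lborel)"
    by (rule nn_integral_mono) (rule pw)
  also have "\<dots> = ennreal A * ((\<integral>\<^sup>+\<tau>. low \<tau> * indicator {0<..1} \<tau> \<partial>lborel) + (\<integral>\<^sup>+\<tau>. up \<tau> * indicator {1<..} \<tau> \<partial>lborel))"
    by (simp add: nn_integral_cmult nn_integral_add)
  also have "\<dots> \<le> ennreal A * (Lambda_lower n \<phi> \<alpha> + Lambda_upper n \<phi> \<alpha>)"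
  proof (intro mult_left_mono add_mono)
    have "(\<integral>\<^sup>+\<tau>. low \<tau> * indicator {0<..1} \<tau> \<partial>lborel) =
          (\<integral>\<^sup>+ t\<in>{0<..1}. ennreal (\<phi> (t powr (1 - \<alpha>) * X) / \<phi> X / t ^ (n + 1)) \<partial>lborel)"
      using X by (intro nn_integral_cong) (simp add: low_def pext_eq)
    also have "\<dots> \<le> Lambda_lower n \<phi> \<alpha>"
      unfolding Lambda_lower_def by (rule SUP_upper) (use X in simp)
    finally show "(\<integral>\<^sup>+\<tau>. low \<tau> * indicator {0<..1} \<tau> \<partial>lborel) \<le> Lambda_lower n \<phi> \<alpha>" .
    have "(\<integral>\<^sup>+\<tau>. up \<tau> * indicator {1<..} \<tau> \<partial>lborel) \<le>
          (\<integral>\<^sup>+ t\<in>{1..}. ennreal (\<phi> (t powr (- \<alpha>) * X) / \<phi> X / t ^ (n + 1)) \<partial>lborel)"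
      using X by (intro nn_integral_mono) (simp add: up_def pext_eq indicator_def)
    also have "\<dots> \<le> Lambda_upper n \<phi> \<alpha>"
      unfolding Lambda_upper_def by (rule SUP_upper) (use X in simp)
    finally show "(\<integral>\<^sup>+\<tau>. up \<tau> * indicator {1<..} \<tau> \<partial>lborel) \<le> Lambda_upper n \<phi> \<alpha>" .
  qed simp
  finally show ?thesis unfolding f_def A_def X_def .
qed

lemma cutoff_eq:
  assumes "z \<in> \<Omega>" "0 < r" "r < t"
  shows "cutoff \<Omega> x r t z = max 0 (min 1 ((t - dist x z) / (t - r)))"
proof -
  have tr: "t - r > 0" using assms by simp
  show ?thesis
  proof (cases "dist x z < r")
    case True
    then have "(t - dist x z) / (t - r) \<ge> 1" using tr by (simp add: field_simps)
    then show ?thesis using True assms by (simp add: cutoff_def)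
  next
    case False
    show ?thesis
    proof (cases "dist x z < t")
      case True
      have "(t - dist x z) / (t - r) \<le> 1" "(t - dist x z) / (t - r) \<ge> 0"
        using False True tr by (auto simp: field_simps)
      then show ?thesis using True False assms by (simp add: cutoff_def)
    next
      case False2: False
      have "(t - dist x z) / (t - r) \<le> 0" using False2 tr by (simp add: divide_nonpos_pos)
      then show ?thesis using False False2 assms by (simp add: cutoff_def)
    qed
  qed
qed

lemma clip_lip: "\<bar>max 0 (min 1 a) - max 0 (min 1 b)\<bar> \<le> min 1 \<bar>a - b\<bar>" for a b :: real
  by (simp add: max_def min_def abs_if)

lemma cutoff_lip:
  assumes "z \<in> \<Omega>" "w \<in> \<Omega>" "0 < r" "r < t"
  shows "\<bar>cutoff \<Omega> x r t z - cutoff \<Omega> x r t w\<bar> \<le> min 1 (dist z w / (t - r))"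
proof -
  have tr: "t - r > 0" using assms by simp
  have "\<bar>(t - dist x z) / (t - r) - (t - dist x w) / (t - r)\<bar> = \<bar>dist x w - dist x z\<bar> / (t - r)"
  proof -
    have "(t - dist x z) / (t - r) - (t - dist x w) / (t - r) = (dist x w - dist x z) / (t - r)"
      using tr by (simp add: diff_divide_distrib)
    then show ?thesis using tr by simp
  qed
  also have "\<dots> \<le> dist z w / (t - r)"
  proof (rule divide_right_mono)
    have "dist x w \<le> dist x z + dist z w" "dist x z \<le> dist x w + dist z w"
      using dist_triangle[of x w z] dist_triangle[of x z w] by (auto simp: dist_commute)
    then show "\<bar>dist x w - dist x z\<bar> \<le> dist z w" by linarith
  qed (use tr in simp)
  finally have "min 1 \<bar>(t - dist x z) / (t - r) - (t - dist x w) / (t - r)\<bar> \<le> min 1 (dist z w / (t - r))"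
    by simp
  then show ?thesis using clip_lip[of "(t - dist x z) / (t - r)" "(t - dist x w) / (t - r)"]
    cutoff_eq[OF assms(1,3,4)] cutoff_eq[OF assms(2,3,4)] by simp
qed

lemma cutoff_out:
  assumes "z \<in> \<Omega>" "z \<notin> ball x t" "0 < r" "r < t"
  shows "cutoff \<Omega> x r t z = 0"
  using assms by (auto simp: cutoff_def)

lemma energy_pw:
  fixes \<Omega> :: "'a::euclidean_space set"
  assumes young: "young_function \<phi>" and zw: "z \<in> \<Omega>" "w \<in> \<Omega>" and rt: "0 < r" "r < t" and lam: "lam > 0"
  shows "ennreal (\<phi> (\<bar>cutoff \<Omega> x r t z - cutoff \<Omega> x r t w\<bar> / (lam * dist z w powr \<alpha>)) / dist z w ^ (2 * DIM('a)))
    \<le> (indicator (\<Omega> \<inter> ball x t) z + indicator (\<Omega> \<inter> ball x t) w) *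
       ennreal (pext \<phi> (min 1 (dist z w / (t - r)) * dist z w powr (-\<alpha>) / lam) / dist z w ^ (2 * DIM('a)))"
proof (cases "z = w")
  case True
  have "\<phi> 0 = 0" using young by (simp add: young_function_def)
  then show ?thesis using True by simp
next
  case False
  define \<rho> where "\<rho> = dist z w"
  have \<rho>: "\<rho> > 0" using False by (simp add: \<rho>_def)
  show ?thesis
  proof (cases "z \<in> ball x t \<or> w \<in> ball x t")
    case False2: False
    have "cutoff \<Omega> x r t z = 0" "cutoff \<Omega> x r t w = 0"
      using False2 zw rt cutoff_out by auto
    moreover have "\<phi> 0 = 0" using young by (simp add: young_function_def)
    ultimately show ?thesis by simp
  next
    case True
    have ind: "1 \<le> (indicator (\<Omega> \<inter> ball x t) z + indicator (\<Omega> \<inter> ball x t) w :: ennreal)"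
      using True zw by (auto simp: indicator_def)
    define D where "D = \<bar>cutoff \<Omega> x r t z - cutoff \<Omega> x r t w\<bar>"
    have D: "0 \<le> D" "D \<le> min 1 (\<rho> / (t - r))"
      using cutoff_lip[OF zw rt] by (auto simp: D_def \<rho>_def)
    have e: "D / (lam * \<rho> powr \<alpha>) = D * (\<rho> powr (-\<alpha>) / lam)"
      using \<rho> lam by (simp add: powr_minus field_simps)
    have "D * (\<rho> powr (-\<alpha>) / lam) \<le> min 1 (\<rho> / (t - r)) * (\<rho> powr (-\<alpha>) / lam)"
      using D lam by (intro mult_right_mono) auto
    then have "\<phi> (D / (lam * \<rho> powr \<alpha>)) \<le> \<phi> (min 1 (\<rho> / (t - r)) * \<rho> powr (-\<alpha>) / lam)"
      unfolding e using D lam by (intro yf_mono[OF young]) auto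
    also have "\<dots> = pext \<phi> (min 1 (\<rho> / (t - r)) * \<rho> powr (-\<alpha>) / lam)"
      using D lam rt by (intro pext_eq[symmetric]) auto
    finally have le: "\<phi> (D / (lam * \<rho> powr \<alpha>)) / \<rho> ^ (2 * DIM('a)) \<le>
        pext \<phi> (min 1 (\<rho> / (t - r)) * \<rho> powr (-\<alpha>) / lam) / \<rho> ^ (2 * DIM('a))"
      using \<rho> by (intro divide_right_mono) auto
    have "ennreal (\<phi> (D / (lam * \<rho> powr \<alpha>)) / \<rho> ^ (2 * DIM('a))) \<le>
        1 * ennreal (pext \<phi> (min 1 (\<rho> / (t - r)) * \<rho> powr (-\<alpha>) / lam) / \<rho> ^ (2 * DIM('a)))"
      using le by (simp add: ennreal_leI)
    also have "\<dots> \<le> (indicator (\<Omega> \<inter> ball x t) z + indicator (\<Omega> \<inter> ball x t) w) *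
       ennreal (pext \<phi> (min 1 (\<rho> / (t - r)) * \<rho> powr (-\<alpha>) / lam) / \<rho> ^ (2 * DIM('a)))"
      by (rule mult_right_mono[OF ind]) simp
    finally show ?thesis unfolding D_def \<rho>_def .
  qed
qed

lemma translate_int:
  fixes g :: "'a::euclidean_space \<Rightarrow> ennreal"
  assumes [measurable]: "g \<in> borel_measurable borel"
  shows "(\<integral>\<^sup>+ w. g (w - z) \<partial>lborel) = (\<integral>\<^sup>+ h. g h \<partial>lborel)"
proof -
  have "(\<integral>\<^sup>+ w. g (w - z) \<partial>lborel) = (\<integral>\<^sup>+ w. g (w - z) \<partial>distr lborel borel ((+) z))"
    by (simp add: lborel_distr_plus)
  also have "\<dots> = (\<integral>\<^sup>+ h. g (z + h - z) \<partial>lborel)"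
    by (subst nn_integral_distr) auto
  finally show ?thesis by simp
qed

lemma energy_bound:
  fixes \<Omega> :: "'a::euclidean_space set" and \<alpha> :: real
  assumes young: "young_function \<phi>" and op: "open \<Omega>" and rt: "0 < r" "r < t" and lam: "lam > 0"
  defines "H \<equiv> (\<lambda>\<rho>. ennreal (pext \<phi> (min 1 (\<rho> / (t - r)) * \<rho> powr (-\<alpha>) / lam) / \<rho> ^ (2 * DIM('a))))"
  shows "besov_energy \<alpha> \<phi> \<Omega> (cutoff \<Omega> x r t) lam \<le>
      2 * emeasure lborel (\<Omega> \<inter> ball x t) * (\<integral>\<^sup>+ h. H (norm h) \<partial>(lborel :: 'a measure))"
proof -
  define B where "B = \<Omega> \<inter> ball x t"
  have Bb[measurable]: "B \<in> sets borel" using op by (simp add: B_def open_Int)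
  have Hm[measurable]: "H \<in> borel_measurable borel" using young unfolding H_def by measurable
  define K where "K = (\<integral>\<^sup>+ h. H (norm h) \<partial>(lborel :: 'a measure))"
  have K1: "(\<integral>\<^sup>+ w. H (dist z w) \<partial>lborel) = K" for z :: 'a
    using translate_int[of "\<lambda>h. H (norm h)" z] unfolding K_def by (simp add: dist_norm norm_minus_commute)
  have K2: "(\<integral>\<^sup>+ z. H (dist z w) \<partial>lborel) = K" for w :: 'a
    using translate_int[of "\<lambda>h. H (norm h)" w] unfolding K_def by (simp add: dist_norm)
  let ?u = "cutoff \<Omega> x r t"
  have "besov_energy \<alpha> \<phi> \<Omega> ?u lam \<le>
      (\<integral>\<^sup>+ z. (\<integral>\<^sup>+ w. (indicator B z + indicator B w) * H (dist z w) \<partial>lebesgue) \<partial>lebesgue)"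
    unfolding besov_energy_def
  proof (rule nn_integral_mono)
    fix z :: 'a
    show "(\<integral>\<^sup>+ w\<in>\<Omega>. ennreal (\<phi> (\<bar>?u z - ?u w\<bar> / (lam * dist z w powr \<alpha>)) / dist z w ^ (2 * DIM('a))) \<partial>lebesgue) * indicator \<Omega> z
       \<le> (\<integral>\<^sup>+ w. (indicator B z + indicator B w) * H (dist z w) \<partial>lebesgue)"
    proof (cases "z \<in> \<Omega>")
      case False then show ?thesis by simp
    next
      case True
      have "(\<integral>\<^sup>+ w\<in>\<Omega>. ennreal (\<phi> (\<bar>?u z - ?u w\<bar> / (lam * dist z w powr \<alpha>)) / dist z w ^ (2 * DIM('a))) \<partial>lebesgue)
         \<le> (\<integral>\<^sup>+ w. (indicator B z + indicator B w) * H (dist z w) \<partial>lebesgue)"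
      proof (rule nn_integral_mono)
        fix w :: 'a
        show "ennreal (\<phi> (\<bar>?u z - ?u w\<bar> / (lam * dist z w powr \<alpha>)) / dist z w ^ (2 * DIM('a))) * indicator \<Omega> w
           \<le> (indicator B z + indicator B w) * H (dist z w)"
          using energy_pw[OF young True _ rt lam, where w=w and \<alpha>=\<alpha>] unfolding H_def B_def
          by (cases "w \<in> \<Omega>") auto
      qed
      then show ?thesis using True by simp
    qed
  qed
  also have "\<dots> = (\<integral>\<^sup>+ z. (\<integral>\<^sup>+ w. (indicator B z + indicator B w) * H (dist z w) \<partial>lborel) \<partial>lborel)"
    by (simp add: nn_integral_completion)
  also have "\<dots> = (\<integral>\<^sup>+ z. indicator B z * K + (\<integral>\<^sup>+ w. indicator B w * H (dist z w) \<partial>lborel) \<partial>lborel)"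
  proof (rule nn_integral_cong)
    fix z :: 'a
    have "(\<integral>\<^sup>+ w. (indicator B z + indicator B w) * H (dist z w) \<partial>lborel)
        = (\<integral>\<^sup>+ w. indicator B z * H (dist z w) + indicator B w * H (dist z w) \<partial>lborel)"
      by (simp add: distrib_right)
    also have "\<dots> = (\<integral>\<^sup>+ w. indicator B z * H (dist z w) \<partial>lborel) + (\<integral>\<^sup>+ w. indicator B w * H (dist z w) \<partial>lborel)"
      by (rule nn_integral_add) auto
    also have "(\<integral>\<^sup>+ w. indicator B z * H (dist z w) \<partial>lborel) = indicator B z * K"
      by (simp add: nn_integral_cmult K1)
    finally show "(\<integral>\<^sup>+ w. (indicator B z + indicator B w) * H (dist z w) \<partial>lborel) =
        indicator B z * K + (\<integral>\<^sup>+ w. indicator B w * H (dist z w) \<partial>lborel)" .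
  qed
  also have "\<dots> = (\<integral>\<^sup>+ z. indicator B z * K \<partial>lborel) + (\<integral>\<^sup>+ z. (\<integral>\<^sup>+ w. indicator B w * H (dist z w) \<partial>lborel) \<partial>lborel)"
    by (rule nn_integral_add) auto
  also have "(\<integral>\<^sup>+ z. (\<integral>\<^sup>+ w. indicator B w * H (dist z w) \<partial>lborel) \<partial>lborel)
      = (\<integral>\<^sup>+ w. (\<integral>\<^sup>+ z. indicator B w * H (dist z w) \<partial>lborel) \<partial>lborel)"
    by (rule lborel_pair.Fubini'[symmetric]) measurable
  also have "\<dots> = (\<integral>\<^sup>+ w. indicator B w * K \<partial>lborel)"
    by (simp add: nn_integral_cmult K2)
  also have "(\<integral>\<^sup>+ w. indicator B w * K \<partial>lborel) = emeasure lborel B * K"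
    by (simp add: nn_integral_multc)
  finally show ?thesis unfolding B_def K_def by (simp add: mult_2 distrib_right)
qed

lemma cutoff_meas:
  fixes \<Omega> :: "'a::euclidean_space set"
  assumes op: "open \<Omega>" and rt: "0 < r" "r < t"
  shows "cutoff \<Omega> x r t \<in> borel_measurable (lebesgue_on \<Omega>)"
proof -
  have "(\<lambda>z. max 0 (min 1 ((t - dist x z) / (t - r)))) \<in> borel_measurable (lebesgue_on \<Omega>)"
  proof (rule continuous_imp_measurable_on_sets_lebesgue)
    show "continuous_on \<Omega> (\<lambda>z. max 0 (min 1 ((t - dist x z) / (t - r))))"
      using rt by (intro continuous_intros) auto
    show "\<Omega> \<in> sets lebesgue"
      by (rule sets_completionI_sets) (simp add: op)
  qed
  moreover have "\<And>z. z \<in> space (lebesgue_on \<Omega>) \<Longrightarrow> cutoff \<Omega> x r t z = max 0 (min 1 ((t - dist x z) / (t - r)))"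
    using cutoff_eq[OF _ rt] by simp
  ultimately show ?thesis
    using measurable_cong[of "lebesgue_on \<Omega>" "cutoff \<Omega> x r t" "\<lambda>z. max 0 (min 1 ((t - dist x z) / (t - r)))" borel] by blast
qed

lemma ball_measure:
  fixes \<Omega> :: "'a::euclidean_space set"
  assumes op: "open \<Omega>" and x: "x \<in> \<Omega>" and t: "t > 0"
  shows "measure lebesgue (\<Omega> \<inter> ball x t) > 0"
    "emeasure lborel (\<Omega> \<inter> ball x t) = ennreal (measure lebesgue (\<Omega> \<inter> ball x t))"
proof -
  define B where "B = \<Omega> \<inter> ball x t"
  have Bo: "open B" using op by (simp add: B_def open_Int)
  have "x \<in> B" using x t by (simp add: B_def)
  then obtain e where e: "e > 0" "ball x e \<subseteq> B" using Bo open_contains_ball by blast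
  have "cball x (e/2) \<subseteq> ball x e" using e by (auto simp: subset_iff)
  hence "cball x (e/2) \<subseteq> B" using e by blast
  hence "emeasure lborel (cball x (e/2)) \<le> emeasure lborel B"
    using Bo by (intro emeasure_mono) auto
  moreover have "emeasure lborel (cball x (e/2)) > 0"
    using e by (simp add: emeasure_cball[of "e/2" x])
  ultimately have pos: "emeasure lborel B > 0" by (rule less_le_trans[rotated])
  have "B \<subseteq> cball x t" by (auto simp: B_def)
  hence "emeasure lborel B \<le> emeasure lborel (cball x t)" by (intro emeasure_mono) auto
  also have "\<dots> < \<infinity>" using t by (simp add: emeasure_cball)
  finally have fin: "emeasure lborel B < \<infinity>" .
  have mB: "measure lebesgue B = measure lborel B" by (rule measure_completion) (use Bo in simp)
  show "emeasure lborel B = ennreal (measure lebesgue B)"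
    unfolding mB using fin by (simp add: emeasure_eq_ennreal_measure)
  then show "measure lebesgue B > 0" using pos by simp
qed

lemma alg_aux:
  fixes \<mu> S C a L :: real
  assumes "\<mu> > 0" "S > 0" "C > 0"
  shows "2 * \<mu> * (a / S * (S / \<mu> / C) * L) = 2 * a * L / C"
proof -
  have "a / S * (S / \<mu> / C) = a / (\<mu> * C)" using assms by simp
  then show ?thesis using assms by simp
qed

theorem lemma2p5:
  fixes \<phi> :: "real \<Rightarrow> real" and \<alpha> :: real
  assumes dim: "CARD('n::finite) \<ge> 2"
    and alpha: "- real CARD('n) < \<alpha>" "\<alpha> < 0"
    and young: "young_function \<phi>"
    and low: "Lambda_lower CARD('n) \<phi> \<alpha> < \<infinity>"
    and up: "Lambda_upper CARD('n) \<phi> \<alpha> < \<infinity>"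
  shows "\<exists>C>0. \<forall>(\<Omega>::(real^'n) set) x r t.
           open \<Omega> \<and> connected \<Omega> \<and> x \<in> \<Omega> \<and> 0 < r \<and> r < t \<and>
           (\<not> bounded \<Omega> \<or> 2 * t < diameter \<Omega>) \<longrightarrow>
           in_besov \<alpha> \<phi> \<Omega> (cutoff \<Omega> x r t) \<and>
           besov_norm \<alpha> \<phi> \<Omega> (cutoff \<Omega> x r t)
             \<le> C * (t - r) powr (- \<alpha>) /
                 young_inv \<phi> ((t - r) ^ CARD('n) / measure lebesgue (\<Omega> \<inter> ball x t))"
proof -
  define n where "n = CARD('n)"
  have DIMn: "DIM(real^'n) = n" by (simp add: n_def)
  have n1: "n \<ge> 1" using dim by (simp add: n_def)
  define w where "w = unit_ball_vol (real n)"
  have w: "w \<ge> 0" by (simp add: w_def)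
  define L1 where "L1 = enn2real (Lambda_lower n \<phi> \<alpha>)"
  define L2 where "L2 = enn2real (Lambda_upper n \<phi> \<alpha>)"
  have L1: "Lambda_lower n \<phi> \<alpha> = ennreal L1" "L1 \<ge> 0" using low by (simp_all add: L1_def n_def)
  have L2: "Lambda_upper n \<phi> \<alpha> = ennreal L2" "L2 \<ge> 0" using up by (simp_all add: L2_def n_def)
  define C where "C = 1 + 2 * (real n * w) * (L1 + L2)"
  have C1: "C \<ge> 1" using w L1 L2 by (simp add: C_def)
  show ?thesis
  proof (intro exI[of _ C] conjI allI impI)
    show "C > 0" using C1 by simp
    fix \<Omega> :: "(real^'n) set" and x r t
    assume H: "open \<Omega> \<and> connected \<Omega> \<and> x \<in> \<Omega> \<and> 0 < r \<and> r < t \<and> (\<not> bounded \<Omega> \<or> 2 * t < diameter \<Omega>)"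
    then have op: "open \<Omega>" and x: "x \<in> \<Omega>" and rt: "0 < r" "r < t" by auto
    define s where "s = t - r"
    have s: "s > 0" using rt by (simp add: s_def)
    define \<mu> where "\<mu> = measure lebesgue (\<Omega> \<inter> ball x t)"
    have \<mu>: "\<mu> > 0" "emeasure lborel (\<Omega> \<inter> ball x t) = ennreal \<mu>"
      using ball_measure[OF op x, of t] rt unfolding \<mu>_def by auto
    define Y where "Y = s ^ n / \<mu>"
    have Y: "Y > 0" using s \<mu> by (simp add: Y_def)
    define y where "y = young_inv \<phi> Y"
    have y: "y > 0" "\<phi> y = Y" using yf_inv_pos[OF young Y] yf_inv[OF young, of Y] Y by (auto simp: y_def)
    define lam where "lam = C * s powr (- \<alpha>) / y"
    have lam: "lam > 0" using C1 y s by (simp add: lam_def)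
    have X: "s powr (- \<alpha>) / lam = (1 / C) * y"
      using C1 y s by (simp add: lam_def field_simps)
    have \<phi>X: "\<phi> (s powr (- \<alpha>) / lam) \<le> Y / C"
      unfolding X using yf_scale[OF young, of "1 / C" y] C1 y by simp
    have E: "besov_energy \<alpha> \<phi> \<Omega> (cutoff \<Omega> x r t) lam \<le> 1"
    proof -
      let ?H = "\<lambda>\<rho>. ennreal (pext \<phi> (min 1 (\<rho> / (t - r)) * \<rho> powr (-\<alpha>) / lam) / \<rho> ^ (2 * DIM(real^'n)))"
      define Z where "Z = real n * w / s ^ n * \<phi> (s powr (-\<alpha>) / lam)"
      have Z: "Z \<ge> 0" using s w yf_nonneg[OF young, of "s powr (-\<alpha>) / lam"] lam by (simp add: Z_def)
      have E1: "besov_energy \<alpha> \<phi> \<Omega> (cutoff \<Omega> x r t) lam \<le>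
          2 * emeasure lborel (\<Omega> \<inter> ball x t) * (\<integral>\<^sup>+ h. ?H (norm h) \<partial>(lborel :: (real^'n) measure))"
        by (rule energy_bound[OF young op rt lam])
      have "(\<integral>\<^sup>+ h. ?H (norm h) \<partial>(lborel :: (real^'n) measure)) =
          (\<integral>\<^sup>+\<rho>. ennreal (indicator {0..} \<rho> * (real n * w * \<rho> ^ (n - 1))) *
             ennreal (pext \<phi> (min 1 (\<rho> / s) * \<rho> powr (-\<alpha>) / lam) / \<rho> ^ (2 * n)) \<partial>lborel)"
        by (subst radial_integral) (use young in \<open>simp_all add: n_def w_def s_def\<close>)
      also have "\<dots> \<le> ennreal Z * (Lambda_lower n \<phi> \<alpha> + Lambda_upper n \<phi> \<alpha>)"
        unfolding Z_def by (rule K_bound[OF young s lam n1 w])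
      also have "\<dots> = ennreal (Z * (L1 + L2))"
        by (simp only: L1(1) L2(1) ennreal_plus[OF L1(2) L2(2), symmetric] ennreal_mult[OF Z add_nonneg_nonneg[OF L1(2) L2(2)]])
      finally have K: "(\<integral>\<^sup>+ h. ?H (norm h) \<partial>(lborel :: (real^'n) measure)) \<le> ennreal (Z * (L1 + L2))" .
      have "besov_energy \<alpha> \<phi> \<Omega> (cutoff \<Omega> x r t) lam \<le> 2 * ennreal \<mu> * ennreal (Z * (L1 + L2))"
      proof -
        have "2 * emeasure lborel (\<Omega> \<inter> ball x t) * (\<integral>\<^sup>+ h. ?H (norm h) \<partial>(lborel :: (real^'n) measure))
            \<le> 2 * emeasure lborel (\<Omega> \<inter> ball x t) * ennreal (Z * (L1 + L2))"
          by (rule mult_left_mono[OF K]) simp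
        from order_trans[OF E1 this] show ?thesis by (simp only: \<mu>(2))
      qed
      also have "2 * ennreal \<mu> * ennreal (Z * (L1 + L2)) = ennreal (2 * \<mu> * (Z * (L1 + L2)))"
      proof -
        have "ennreal (2 * \<mu> * (Z * (L1 + L2))) = ennreal (2 * \<mu>) * ennreal (Z * (L1 + L2))"
          using \<mu> Z L1 L2 by (intro ennreal_mult) auto
        moreover have "ennreal (2 * \<mu>) = 2 * ennreal \<mu>"
          using \<mu> by (simp add: ennreal_mult)
        ultimately show ?thesis by simp
      qed
      also have "\<dots> \<le> ennreal 1"
      proof (rule ennreal_leI)
        have "2 * \<mu> * (Z * (L1 + L2)) \<le> 2 * \<mu> * (real n * w / s ^ n * (Y / C) * (L1 + L2))"
        proof -
          have c0: "0 \<le> real n * w / s ^ n" using w s by simp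
          have "Z \<le> real n * w / s ^ n * (Y / C)"
            unfolding Z_def by (rule mult_left_mono[OF \<phi>X c0])
          then have "Z * (L1 + L2) \<le> real n * w / s ^ n * (Y / C) * (L1 + L2)"
            by (rule mult_right_mono) (use L1 L2 in simp)
          then show ?thesis
            by (rule mult_left_mono) (use \<mu> in simp)
        qed
        also have "\<dots> = 2 * (real n * w) * (L1 + L2) / C"
        proof -
          have sn: "s ^ n > 0" using s by simp
          have C0: "C > 0" using C1 by simp
          show ?thesis unfolding Y_def by (rule alg_aux[OF \<mu>(1) sn C0])
        qed
        also have "\<dots> \<le> 1"
        proof -
          have a: "2 * (real n * w) * (L1 + L2) \<le> C" unfolding C_def by simp
          show ?thesis using a C1 by (simp add: divide_le_eq)
        qed
        finally show "2 * \<mu> * (Z * (L1 + L2)) \<le> 1" .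
      qed
      finally show ?thesis by simp
    qed
    show "in_besov \<alpha> \<phi> \<Omega> (cutoff \<Omega> x r t)"
      unfolding in_besov_def using cutoff_meas[OF op rt] E lam by blast
    have "besov_norm \<alpha> \<phi> \<Omega> (cutoff \<Omega> x r t) \<le> lam"
      unfolding besov_norm_def
    proof (rule cInf_lower)
      show "lam \<in> {lam. 0 < lam \<and> besov_energy \<alpha> \<phi> \<Omega> (cutoff \<Omega> x r t) lam \<le> 1}"
        using E lam by blast
      show "bdd_below {lam. 0 < lam \<and> besov_energy \<alpha> \<phi> \<Omega> (cutoff \<Omega> x r t) lam \<le> 1}"
        by (rule bdd_belowI[of _ 0]) simp
    qed
    also have "lam = C * (t - r) powr (- \<alpha>) /
                 young_inv \<phi> ((t - r) ^ CARD('n) / measure lebesgue (\<Omega> \<inter> ball x t))"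
      unfolding lam_def s_def y_def Y_def \<mu>_def n_def by (rule refl)
    finally show "besov_norm \<alpha> \<phi> \<Omega> (cutoff \<Omega> x r t) \<le> C * (t - r) powr (- \<alpha>) /
                 young_inv \<phi> ((t - r) ^ CARD('n) / measure lebesgue (\<Omega> \<inter> ball x t))" .
  qed
qed

end
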